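(* (LipSDP-Neuron upper bound for two-layer networks.) Let $W\in\mathbb{R}^{n\times m}$, $u\in\mathbb{R}^{1\times n}$ and real numbers $a\le b$. Suppose $\zeta\ge0$ and $\lambda\in\mathbb{R}^n_+$ are such that, with $T=\mathrm{diag}(\lambda)$, $$\begin{pmatrix}-2ab\,W^TTW-\zeta I_m& (a+b)W^TT\\ (a+b)TW& -2T+u^Tu\end{pmatrix}\preceq 0 .$$ Then $$\sqrt{\zeta}\;\ge\;\max_{y\in[a,b]^n}\big\|W^T\mathrm{diag}(y)u^T\big\|_2 .$$ In particular (with $a=0$, $b=1$) the optimal value of the program $\min\{\sqrt\zeta\}$ subject to these constraints is an upper bound on the $\ell_2$-FGL $\max_{y\in\{0,1\}^n}\|W^T\mathrm{diag}(y)u^T\|_2$ of the ReLU network $x\mapsto u\,\mathrm{ReLU}(Wx)$.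
   Context: $\mathrm{diag}(v)$ is the diagonal matrix with diagonal $v$; $I_m$ is the $m\times m$ identity; $P\preceq0$ means $-P$ is positive semidefinite; $\mathbb{R}_+=[0,\infty)$. *)

theory Defs
  imports "HOL-Analysis.Analysis"
begin

definition diagm :: "real ^ 'n \<Rightarrow> real ^ 'n ^ 'n" where
  "diagm v = (\<chi> i j. if i = j then v $ i else 0)"

definition neg_semidef :: "real ^ 'k ^ 'k \<Rightarrow> bool" where
  "neg_semidef P \<longleftrightarrow> transpose P = P \<and> (\<forall>x. x \<bullet> (P *v x) \<le> 0)"

definition block_mat ::
  "real ^ 'm ^ 'm \<Rightarrow> real ^ 'n ^ 'm \<Rightarrow> real ^ 'm ^ 'n \<Rightarrow> real ^ 'n ^ 'n
    \<Rightarrow> real ^ ('m + 'n) ^ ('m + 'n)" where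
  "block_mat A B C D = (\<chi> i j. case (i, j) of
      (Inl p, Inl q) \<Rightarrow> A $ p $ q
    | (Inl p, Inr q) \<Rightarrow> B $ p $ q
    | (Inr p, Inl q) \<Rightarrow> C $ p $ q
    | (Inr p, Inr q) \<Rightarrow> D $ p $ q)"

text \<open>u^T u for a row vector u (outer product).\<close>
definition outer :: "real ^ 'n \<Rightarrow> real ^ 'n ^ 'n" where
  "outer u = (\<chi> i j. u $ i * u $ j)"

end

theory Submission
  imports Defs
begin

lemma sum_UNIV_sum:
  fixes f :: "('a::finite + 'b::finite) \<Rightarrow> real"
  shows "sum f UNIV = sum (\<lambda>p. f (Inl p)) UNIV + sum (\<lambda>q. f (Inr q)) UNIV"
proof -
  have "sum f (UNIV <+> UNIV) = sum (f \<circ> Inl) UNIV + sum (f \<circ> Inr) UNIV"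
    by (rule sum.Plus) auto
  thus ?thesis by (simp add: o_def)
qed

lemma block_quad:
  fixes A :: "real^'m^'m" and B :: "real^'n^'m" and C :: "real^'m^'n" and D :: "real^'n^'n"
  shows "(\<chi> k. case k of Inl p \<Rightarrow> x$p | Inr q \<Rightarrow> z$q) \<bullet> (block_mat A B C D *v (\<chi> k. case k of Inl p \<Rightarrow> x$p | Inr q \<Rightarrow> z$q))
     = x \<bullet> (A *v x) + x \<bullet> (B *v z) + z \<bullet> (C *v x) + z \<bullet> (D *v z)"
  unfolding inner_vec_def matrix_vector_mult_def block_mat_def
  by (simp add: sum_UNIV_sum sum_distrib_left sum.distrib algebra_simps)

lemma diagm_mv: "(diagm v *v x) $ i = v $ i * x $ i"
proof -
  have "(\<Sum>j\<in>UNIV. (if i = j then v $ i else 0) * x $ j) = (\<Sum>j\<in>UNIV. if i = j then v$i * x$j else 0)"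
    by (rule sum.cong) auto
  thus ?thesis unfolding diagm_def matrix_vector_mult_def by simp
qed

lemma inner_transpose: "(x::real^'m) \<bullet> (transpose W *v w) = (W *v x) \<bullet> w"
  by (metis dot_lmul_matrix inner_commute transpose_matrix_vector)

lemma scalar_matrix_vector_assoc: "((c::real) *\<^sub>R (A::real^'n^'m)) *v x = c *\<^sub>R (A *v x)"
  unfolding vec_eq_iff matrix_vector_mult_def
  by (simp add: sum_distrib_left mult.assoc)

lemma neg_mv: "(- (A::real^'n^'m)) *v x = - (A *v x)"
  by (simp add: vec_eq_iff matrix_vector_mult_def sum_negf)

theorem mainTheorem8:
  fixes W :: "real ^ 'm ^ 'n" and u :: "real ^ 'n" and a b \<zeta> :: real
    and lam :: "real ^ 'n"
  assumes "a \<le> b"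
    and "\<zeta> \<ge> 0"
    and "\<forall>i. lam $ i \<ge> 0"
    and "neg_semidef (block_mat
           ((- (2 * a * b)) *\<^sub>R (transpose W ** diagm lam ** W) - \<zeta> *\<^sub>R mat 1)
           ((a + b) *\<^sub>R (transpose W ** diagm lam))
           ((a + b) *\<^sub>R (diagm lam ** W))
           ((- 2) *\<^sub>R diagm lam + outer u))"
  shows "\<forall>y :: real ^ 'n. (\<forall>i. a \<le> y $ i \<and> y $ i \<le> b) \<longrightarrow>
           norm ((transpose W ** diagm y) *v u) \<le> sqrt \<zeta>"
proof (intro allI impI)
  fix y :: "real^'n"
  assume y: "\<forall>i. a \<le> y $ i \<and> y $ i \<le> b"
  define v where "v = (transpose W ** diagm y) *v u"
  define x where "x = v"
  define s where "s = W *v x"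
  define z where "z = diagm y *v s"
  define X :: "real^('m+'n)" where "X = (\<chi> k. case k of Inl p \<Rightarrow> x$p | Inr q \<Rightarrow> z$q)"
  have Q: "X \<bullet> (block_mat
           ((- (2 * a * b)) *\<^sub>R (transpose W ** diagm lam ** W) - \<zeta> *\<^sub>R mat 1)
           ((a + b) *\<^sub>R (transpose W ** diagm lam))
           ((a + b) *\<^sub>R (diagm lam ** W))
           ((- 2) *\<^sub>R diagm lam + outer u) *v X) \<le> 0"
    using assms(4) unfolding neg_semidef_def by blast
  have t1: "x \<bullet> (((- (2 * a * b)) *\<^sub>R (transpose W ** diagm lam ** W) - \<zeta> *\<^sub>R mat 1) *v x)
      = - (2*a*b) * (\<Sum>i\<in>UNIV. lam$i * s$i * s$i) - \<zeta> * (x \<bullet> x)"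
  proof -
    have "x \<bullet> ((transpose W ** diagm lam ** W) *v x) = x \<bullet> (transpose W *v (diagm lam *v s))"
      by (simp only: s_def matrix_vector_mul_assoc matrix_mul_assoc)
    also have "\<dots> = s \<bullet> (diagm lam *v s)" by (simp only: inner_transpose s_def)
    also have "\<dots> = (\<Sum>i\<in>UNIV. lam$i * s$i * s$i)"
      by (simp add: inner_vec_def diagm_mv algebra_simps)
    finally show ?thesis
      by (simp add: matrix_vector_mult_diff_rdistrib scalar_matrix_vector_assoc inner_diff_right neg_mv)
  qed
  have t2: "x \<bullet> (((a + b) *\<^sub>R (transpose W ** diagm lam)) *v z)
      = (a+b) * (\<Sum>i\<in>UNIV. lam$i * y$i * s$i * s$i)"
  proof -
    have "x \<bullet> ((transpose W ** diagm lam) *v z) = x \<bullet> (transpose W *v (diagm lam *v z))"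
      by (simp only: matrix_vector_mul_assoc)
    also have "\<dots> = s \<bullet> (diagm lam *v z)" by (simp only: inner_transpose s_def)
    also have "\<dots> = (\<Sum>i\<in>UNIV. lam$i * y$i * s$i * s$i)"
      by (simp add: z_def inner_vec_def diagm_mv algebra_simps)
    finally show ?thesis
      by (simp add: scalar_matrix_vector_assoc)
  qed
  have t3: "z \<bullet> (((a + b) *\<^sub>R (diagm lam ** W)) *v x)
      = (a+b) * (\<Sum>i\<in>UNIV. lam$i * y$i * s$i * s$i)"
  proof -
    have "z \<bullet> ((diagm lam ** W) *v x) = z \<bullet> (diagm lam *v s)"
      by (simp only: s_def matrix_vector_mul_assoc matrix_mul_assoc)
    also have "\<dots> = (\<Sum>i\<in>UNIV. lam$i * y$i * s$i * s$i)"
      by (simp add: z_def inner_vec_def diagm_mv algebra_simps)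
    finally show ?thesis
      by (simp add: scalar_matrix_vector_assoc)
  qed
  have uz: "u \<bullet> z = v \<bullet> v"
  proof -
    have "v \<bullet> v = x \<bullet> (transpose W *v (diagm y *v u))"
      by (simp only: x_def v_def matrix_vector_mul_assoc)
    also have "\<dots> = s \<bullet> (diagm y *v u)" by (simp only: s_def inner_transpose)
    also have "\<dots> = u \<bullet> z" by (simp add: z_def inner_vec_def diagm_mv algebra_simps)
    finally show ?thesis by simp
  qed
  have t4: "z \<bullet> (((- 2) *\<^sub>R diagm lam + outer u) *v z)
      = -2 * (\<Sum>i\<in>UNIV. lam$i * y$i * y$i * s$i * s$i) + (u \<bullet> z)^2"
  proof -
    have "z \<bullet> (outer u *v z) = (u \<bullet> z)^2"
      by (simp add: outer_def inner_vec_def matrix_vector_mult_def power2_eq_square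
          sum_distrib_left sum_distrib_right algebra_simps)
    moreover have "z \<bullet> (diagm lam *v z) = (\<Sum>i\<in>UNIV. lam$i * y$i * y$i * s$i * s$i)"
      by (simp add: z_def inner_vec_def diagm_mv algebra_simps)
    ultimately show ?thesis
      by (simp add: matrix_vector_mult_add_rdistrib matrix_vector_mult_diff_rdistrib scalar_matrix_vector_assoc inner_add_right inner_diff_right)
  qed
  have pos: "0 \<le> (\<Sum>i\<in>UNIV. lam$i * s$i * s$i * (-2*a*b + 2*(a+b)*y$i - 2*y$i*y$i))"
  proof (rule sum_nonneg)
    fix i :: 'n
    have "0 \<le> -2*a*b + 2*(a+b)*y$i - 2*y$i*y$i"
    proof -
      have "0 \<le> (y$i - a) * (b - y$i)" using y by (intro mult_nonneg_nonneg) auto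
      thus ?thesis by (simp add: algebra_simps)
    qed
    moreover have "0 \<le> lam$i * (s$i * s$i)" by (metis assms(3) mult_nonneg_nonneg zero_le_square)
    hence "0 \<le> lam$i * s$i * s$i" by (simp add: mult.assoc)
    ultimately show "0 \<le> lam$i * s$i * s$i * (-2*a*b + 2*(a+b)*y$i - 2*y$i*y$i)" by simp
  qed
  have eq: "(\<Sum>i\<in>UNIV. lam$i * s$i * s$i * (-2*a*b + 2*(a+b)*y$i - 2*y$i*y$i))
     = - (2*a*b) * (\<Sum>i\<in>UNIV. lam$i * s$i * s$i) + 2 * ((a+b) * (\<Sum>i\<in>UNIV. lam$i * y$i * s$i * s$i))
       - 2 * (\<Sum>i\<in>UNIV. lam$i * y$i * y$i * s$i * s$i)"
    by (simp add: sum_distrib_left sum.distrib sum_subtractf sum_negf algebra_simps)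
  have "(v \<bullet> v)^2 \<le> \<zeta> * (v \<bullet> v)"
  proof -
    have Q': "x \<bullet> (((- (2 * a * b)) *\<^sub>R (transpose W ** diagm lam ** W) - \<zeta> *\<^sub>R mat 1) *v x)
      + x \<bullet> (((a + b) *\<^sub>R (transpose W ** diagm lam)) *v z)
      + z \<bullet> (((a + b) *\<^sub>R (diagm lam ** W)) *v x)
      + z \<bullet> (((- 2) *\<^sub>R diagm lam + outer u) *v z) \<le> 0"
      using Q unfolding X_def block_quad .
    have "(u \<bullet> z)^2 \<le> \<zeta> * (x \<bullet> x)"
      using Q' pos eq t1 t2 t3 t4 by linarith
    thus ?thesis using uz x_def by simp
  qed
  hence h4: "norm v ^ 4 \<le> \<zeta> * (norm v)^2"
    by (simp add: dot_square_norm flip: power_mult)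
  have hp: "(norm v)^2 * (norm v)^2 \<le> \<zeta> * (norm v)^2"
    using h4 by (simp flip: power_add)
  have "(norm v)^2 \<le> \<zeta>"
  proof (cases "norm v = 0")
    case True thus ?thesis using assms(2) by simp
  next
    case False
    hence "0 < (norm v)^2" by simp
    thus ?thesis using hp mult_le_cancel_right_pos by blast
  qed
  thus "norm v \<le> sqrt \<zeta>" using real_le_rsqrt by blast
qed

end
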